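(* Finding the minimum of a sequence of $n$ distinct elements has deterministic fragile complexity $\Theta(\log(\mathrm{Inv}))$. That is: there is a deterministic comparison-based algorithm that finds the minimum such that every element participates in $O(\log(\mathrm{Inv}))$ comparisons, where $\mathrm{Inv}$ is the number of inversions of the input; and for every $k$ there are inputs with $\mathrm{Inv}\le k$ on which any deterministic comparison-based algorithm forces some element to participate in $\Omega(\log k)$ comparisons.
   Context: An inversion of a sequence $a_1,\dots,a_n$ is a pair of indices $i<j$ with $a_i>a_j$; $\mathrm{Inv}$ is the total number of inversions in the input. The fragile complexity of a comparison-based algorithm is the maximum, over input elements, of the number of comparisons in which the element participates; the fragile complexity of a problem is the best possible fragile complexity of any algorithm solving it. Logarithms of a parameter $r$ are understood as $\log\max(r,2)$ so that bounds are at least constant. *)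

theory Defs
  imports Complex_Main
begin

text \<open>A deterministic comparison-based algorithm on inputs of a fixed size n is modelled
  as a binary decision tree. Inputs are lists of distinct natural numbers (only the
  relative order matters for a comparison-based algorithm).\<close>

datatype ctree = Leaf nat | Cmp nat nat ctree ctree

fun run :: "nat list \<Rightarrow> ctree \<Rightarrow> nat" where
  "run xs (Leaf r) = r"
| "run xs (Cmp i j l r) = (if xs ! i < xs ! j then run xs l else run xs r)"

fun cmps :: "nat list \<Rightarrow> ctree \<Rightarrow> (nat \<times> nat) list" where
  "cmps xs (Leaf r) = []"
| "cmps xs (Cmp i j l r) = (i, j) # (if xs ! i < xs ! j then cmps xs l else cmps xs r)"

definition participations :: "nat list \<Rightarrow> ctree \<Rightarrow> nat \<Rightarrow> nat" where
  "participations xs t e = length (filter (\<lambda>(i, j). i = e \<or> j = e) (cmps xs t))"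

fun wf_tree :: "nat \<Rightarrow> ctree \<Rightarrow> bool" where
  "wf_tree n (Leaf r) = (r < n)"
| "wf_tree n (Cmp i j l r) = (i < n \<and> j < n \<and> wf_tree n l \<and> wf_tree n r)"

definition finds_min :: "nat \<Rightarrow> ctree \<Rightarrow> bool" where
  "finds_min n t \<longleftrightarrow> wf_tree n t \<and>
     (\<forall>xs. length xs = n \<and> distinct xs \<longrightarrow> xs ! run xs t = Min (set xs))"

definition inversions :: "nat list \<Rightarrow> nat" where
  "inversions xs = card {(i, j). i < j \<and> j < length xs \<and> xs ! i > xs ! j}"

definition logm :: "real \<Rightarrow> real" where
  "logm r = log 2 (max r 2)"

end

theory Submission
  imports Defs "HOL-Library.Discrete_Functions"
begin


fun bind :: "ctree \<Rightarrow> (nat \<Rightarrow> ctree) \<Rightarrow> ctree" where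
  "bind (Leaf r) f = f r"
| "bind (Cmp i j l r) f = Cmp i j (bind l f) (bind r f)"

lemma run_bind[simp]: "run xs (bind t f) = run xs (f (run xs t))"
  by (induction t) auto

lemma cmps_bind[simp]: "cmps xs (bind t f) = cmps xs t @ cmps xs (f (run xs t))"
  by (induction t) auto

lemma wf_bind: "wf_tree n t \<Longrightarrow> (\<And>r. r < n \<Longrightarrow> wf_tree n (f r)) \<Longrightarrow> wf_tree n (bind t f)"
  by (induction t) auto

function mintree :: "nat list \<Rightarrow> ctree" where
  "mintree [] = Leaf 0"
| "mintree [a] = Leaf a"
| "mintree (a#b#rest) = bind (mintree (take (length (a#b#rest) div 2) (a#b#rest)))
     (\<lambda>x. bind (mintree (drop (length (a#b#rest) div 2) (a#b#rest))) (\<lambda>y. Cmp x y (Leaf x) (Leaf y)))"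
  by pat_completeness auto
termination by (relation "measure length") auto

declare mintree.simps(3)[simp del]

lemma msplit: "length L \<ge> 2 \<Longrightarrow> mintree L = bind (mintree (take (length L div 2) L))
     (\<lambda>x. bind (mintree (drop (length L div 2) L)) (\<lambda>y. Cmp x y (Leaf x) (Leaf y)))"
  by (cases L rule: mintree.cases) (auto simp only: mintree.simps(3), auto)

lemma halves: "length L \<ge> 2 \<Longrightarrow> take (length L div 2) L \<noteq> [] \<and> drop (length L div 2) L \<noteq> []
   \<and> set L = set (take (length L div 2) L) \<union> set (drop (length L div 2) L)
   \<and> length (take (length L div 2) L) < length L \<and> length (drop (length L div 2) L) < length L"
proof -
  assume a: "length L \<ge> 2"
  have "set L = set (take (length L div 2) L) \<union> set (drop (length L div 2) L)"
    by (metis set_append append_take_drop_id)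
  moreover have "take (length L div 2) L \<noteq> []" using a by (cases L) auto
  moreover have "drop (length L div 2) L \<noteq> []" using a by (simp add: drop_eq_Nil)
  moreover have "length (take (length L div 2) L) < length L" using a by simp
  moreover have "length (drop (length L div 2) L) < length L" using a by simp
  ultimately show ?thesis by blast
qed

lemma mt_run: "L \<noteq> [] \<Longrightarrow> run xs (mintree L) \<in> set L \<and> (\<forall>a\<in>set L. \<not> xs!a < xs!(run xs (mintree L)))"
proof (induction L rule: length_induct)
  case (1 L)
  show ?case
  proof (cases "length L \<ge> 2")
    case False
    then obtain a where "L = [a]" using 1(2) by (cases L rule: mintree.cases) auto
    then show ?thesis by simp
  next
    case True
    define h where "h = length L div 2"
    note hv = halves[OF True, folded h_def]
    define x where "x = run xs (mintree (take h L))"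
    define y where "y = run xs (mintree (drop h L))"
    have x: "x \<in> set (take h L)" "\<forall>a\<in>set (take h L). \<not> xs!a < xs!x"
      using 1(1) hv unfolding x_def by blast+
    have y: "y \<in> set (drop h L)" "\<forall>a\<in>set (drop h L). \<not> xs!a < xs!y"
      using 1(1) hv unfolding y_def by blast+
    have r: "run xs (mintree L) = (if xs!x < xs!y then x else y)"
      unfolding msplit[OF True, folded h_def] x_def y_def by simp
    have S: "set L = set (take h L) \<union> set (drop h L)" using hv by blast
    show ?thesis
    proof (cases "xs!x < xs!y")
      case True
      have "\<not> xs!a < xs!x" if a: "a \<in> set L" for a
      proof (cases "a \<in> set (take h L)")
        case True
        then show ?thesis using x(2) by blast
      next
        case False
        then have "a \<in> set (drop h L)" using a S by blast
        then have "\<not> xs!a < xs!y" using y(2) by blast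
        then show ?thesis using \<open>xs!x < xs!y\<close> by linarith
      qed
      moreover have "x \<in> set L" using x(1) S by blast
      ultimately show ?thesis using True r by simp
    next
      case False
      have "\<not> xs!a < xs!y" if a: "a \<in> set L" for a
      proof (cases "a \<in> set (take h L)")
        case True
        then have "\<not> xs!a < xs!x" using x(2) by blast
        then show ?thesis using \<open>\<not> xs!x < xs!y\<close> by linarith
      next
        case False
        then have "a \<in> set (drop h L)" using a S by blast
        then show ?thesis using y(2) by blast
      qed
      moreover have "y \<in> set L" using y(1) S by blast
      ultimately show ?thesis using False r by simp
    qed
  qed
qed

lemma mt_set: "set (cmps xs (mintree L)) \<subseteq> set L \<times> set L"
proof (induction L rule: length_induct)
  case (1 L)
  show ?case
  proof (cases "length L \<ge> 2")
    case False
    then have "L = [] \<or> (\<exists>a. L = [a])" by (cases L rule: mintree.cases) auto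
    then show ?thesis by auto
  next
    case True
    define h where "h = length L div 2"
    note hv = halves[OF True, folded h_def]
    have c: "cmps xs (mintree L) = cmps xs (mintree (take h L)) @ cmps xs (mintree (drop h L))
       @ [(run xs (mintree (take h L)), run xs (mintree (drop h L)))]"
      unfolding msplit[OF True, folded h_def] by simp
    have "set (cmps xs (mintree (take h L))) \<subseteq> set L \<times> set L"
      "set (cmps xs (mintree (drop h L))) \<subseteq> set L \<times> set L"
      using 1(1) hv by blast+
    moreover have "run xs (mintree (take h L)) \<in> set L" "run xs (mintree (drop h L)) \<in> set L"
      using mt_run[of "take h L" xs] mt_run[of "drop h L" xs] hv by blast+
    ultimately show ?thesis unfolding c by auto
  qed
qed

definition pc :: "nat \<Rightarrow> (nat \<times> nat) list \<Rightarrow> nat" where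
  "pc e ps = length (filter (\<lambda>(i, j). i = e \<or> j = e) ps)"

lemma pc_append[simp]: "pc e (a @ b) = pc e a + pc e b" by (simp add: pc_def)
lemma pc_Cons[simp]: "pc e (x # b) = (if fst x = e \<or> snd x = e then 1 else 0) + pc e b"
  by (cases x) (simp add: pc_def)
lemma pc_Nil[simp]: "pc e [] = 0" by (simp add: pc_def)

lemma mt_pc0: "e \<notin> set L \<Longrightarrow> pc e (cmps xs (mintree L)) = 0"
  using mt_set[of xs L] unfolding pc_def by (auto simp: filter_empty_conv)

lemma mt_pc: "distinct L \<Longrightarrow> length L \<le> 2^d \<Longrightarrow> pc e (cmps xs (mintree L)) \<le> d"
proof (induction L arbitrary: d rule: length_induct)
  case (1 L)
  show ?case
  proof (cases "length L \<ge> 2")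
    case False
    then have "L = [] \<or> (\<exists>a. L = [a])" by (cases L rule: mintree.cases) auto
    then show ?thesis by auto
  next
    case True
    define h where "h = length L div 2"
    note hv = halves[OF True, folded h_def]
    obtain d' where d: "d = Suc d'" using 1(3) True
      by (cases d) auto
    define B where "B = (2::nat)^d'"
    have lb: "length L \<le> 2 * B" using 1(3) unfolding d B_def by simp
    have "h \<le> B" "length L - h \<le> B" using lb unfolding h_def by presburger+
    then have l1: "length (take h L) \<le> 2^d'" and l2: "length (drop h L) \<le> 2^d'"
      unfolding B_def by auto
    have dis: "distinct (take h L)" "distinct (drop h L)" using 1(2) by auto
    have disj: "set (take h L) \<inter> set (drop h L) = {}"
      using 1(2) set_take_disj_set_drop_if_distinct by blast
    have i1: "pc e (cmps xs (mintree (take h L))) \<le> d'"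
      using 1(1) dis l1 hv by blast
    have i2: "pc e (cmps xs (mintree (drop h L))) \<le> d'"
      using 1(1) dis l2 hv by blast
    have "pc e (cmps xs (mintree (take h L))) = 0 \<or> pc e (cmps xs (mintree (drop h L))) = 0"
    proof (cases "e \<in> set (take h L)")
      case True
      then have "e \<notin> set (drop h L)" using disj by blast
      then show ?thesis using mt_pc0[of e "drop h L" xs] by simp
    next
      case False
      then show ?thesis using mt_pc0[of e "take h L" xs] by simp
    qed
    moreover have c: "cmps xs (mintree L) = cmps xs (mintree (take h L)) @ cmps xs (mintree (drop h L))
       @ [(run xs (mintree (take h L)), run xs (mintree (drop h L)))]"
      unfolding msplit[OF True, folded h_def] by simp
    ultimately show ?thesis using i1 i2 unfolding d c by simp linarith
  qed
qed

lemma mt_wf: "L \<noteq> [] \<Longrightarrow> set L \<subseteq> {..<n} \<Longrightarrow> wf_tree n (mintree L)"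
proof (induction L rule: length_induct)
  case (1 L)
  show ?case
  proof (cases "length L \<ge> 2")
    case False
    then obtain a where "L = [a]" using 1(2) by (cases L rule: mintree.cases) auto
    then show ?thesis using 1(3) by simp
  next
    case True
    define h where "h = length L div 2"
    note hv = halves[OF True, folded h_def]
    have w1: "wf_tree n (mintree (take h L))" "wf_tree n (mintree (drop h L))"
      using 1(1) 1(3) hv by blast+
    show ?thesis unfolding msplit[OF True, folded h_def]
      by (intro wf_bind w1) auto
  qed
qed

function ph1 :: "nat \<Rightarrow> nat \<Rightarrow> nat list \<Rightarrow> ctree" where
  "ph1 n i hs = (if Suc i < n then Cmp i (Suc i) (ph1 n (Suc i) hs) (ph1 n (Suc i) (hs @ [Suc i]))
                 else mintree hs)"
  by auto
termination by (relation "measure (\<lambda>(n, i, hs). n - i)") auto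

declare ph1.simps[simp del]

definition desc :: "nat list \<Rightarrow> nat \<Rightarrow> nat \<Rightarrow> nat list" where
  "desc xs i n = filter (\<lambda>j. \<not> xs!(j-1) < xs!j) [Suc i..<n]"

lemma ph1_eq: "run xs (ph1 n i hs) = run xs (mintree (hs @ desc xs i n)) \<and>
   cmps xs (ph1 n i hs) = map (\<lambda>j. (j, Suc j)) [i..<n-1] @ cmps xs (mintree (hs @ desc xs i n))"
proof (induction n i hs rule: ph1.induct)
  case (1 n i hs)
  show ?case
  proof (cases "Suc i < n")
    case True
    have u1: "[Suc i..<n] = Suc i # [Suc (Suc i)..<n]" using True by (simp add: upt_conv_Cons)
    have u2: "[i..<n - Suc 0] = i # [Suc i..<n - Suc 0]" using True by (simp add: upt_conv_Cons)
    show ?thesis using 1 True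
      by (simp add: ph1.simps[of n i hs] desc_def u1 u2)
  next
    case False
    then show ?thesis by (simp add: ph1.simps[of n i hs] desc_def)
  qed
qed

lemma ph1_wf: "hs \<noteq> [] \<Longrightarrow> set hs \<subseteq> {..<n} \<Longrightarrow> wf_tree n (ph1 n i hs)"
proof (induction n i hs rule: ph1.induct)
  case (1 n i hs)
  then show ?case by (auto simp: ph1.simps[of n i hs] intro: mt_wf)
qed

definition A :: "nat \<Rightarrow> ctree" where "A n = ph1 n 0 [0]"

lemma pc_chain: "pc e (map (\<lambda>j. (j, Suc j)) [0..<m]) \<le> 2"
proof -
  have "pc e (map (\<lambda>j. (j, Suc j)) [0..<m]) = length (filter (\<lambda>j. j = e \<or> Suc j = e) [0..<m])"
    unfolding pc_def by (simp add: filter_map o_def)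
  also have "\<dots> = card (set (filter (\<lambda>j. j = e \<or> Suc j = e) [0..<m]))"
    by (metis distinct_card distinct_filter distinct_upt)
  also have "\<dots> \<le> card {e, e - 1}"
    by (rule card_mono) auto
  also have "\<dots> \<le> 2" by (simp add: card_insert_if)
  finally show ?thesis .
qed

lemma desc_len:
  assumes "distinct xs"
  shows "length (desc xs 0 (length xs)) \<le> inversions xs"
proof -
  let ?D = "set (desc xs 0 (length xs))"
  let ?I = "{(i, j). i < j \<and> j < length xs \<and> xs ! i > xs ! j}"
  have "length (desc xs 0 (length xs)) = card ?D"
    unfolding desc_def by (metis distinct_card distinct_filter distinct_upt)
  also have "\<dots> = card ((\<lambda>j. (j - 1, j)) ` ?D)"
    by (rule card_image[symmetric]) (auto simp: inj_on_def)
  also have "\<dots> \<le> card ?I"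
  proof (rule card_mono)
    show "finite ?I"
      by (rule finite_subset[of _ "{..<length xs} \<times> {..<length xs}"]) auto
    show "(\<lambda>j. (j - 1, j)) ` ?D \<subseteq> ?I"
    proof
      fix p assume "p \<in> (\<lambda>j. (j - 1, j)) ` ?D"
      then obtain j where p: "p = (j - 1, j)" and j: "1 \<le> j" "j < length xs" "\<not> xs!(j-1) < xs!j"
        by (auto simp: desc_def)
      have "xs!(j-1) \<noteq> xs!j" using assms j by (simp add: nth_eq_iff_index_eq)
      then show "p \<in> ?I" using p j by auto
    qed
  qed
  finally show ?thesis unfolding inversions_def .
qed

lemma A_correct:
  assumes n: "n \<ge> 1" shows "finds_min n (A n)"
  unfolding finds_min_def
proof (intro conjI allI impI)
  show "wf_tree n (A n)" unfolding A_def using n by (intro ph1_wf) auto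
  fix xs :: "nat list" assume xs: "length xs = n \<and> distinct xs"
  let ?L = "0 # desc xs 0 n"
  have ne: "xs \<noteq> []" using xs n by auto
  obtain m where m: "m < n" "xs!m = Min (set xs)"
    using Min_in[of "set xs"] ne xs by (auto simp: in_set_conv_nth)
  have mL: "m \<in> set ?L"
  proof (cases "m = 0")
    case False
    have "xs!(m-1) \<in> set xs" using m xs by auto
    then have "xs!m \<le> xs!(m-1)" using m by simp
    moreover have "xs!(m-1) \<noteq> xs!m" using xs m(1) False nth_eq_iff_index_eq[of xs "m-1" m] by auto
    ultimately show ?thesis using False m by (auto simp: desc_def)
  qed simp
  have r: "run xs (A n) = run xs (mintree ?L)" unfolding A_def using ph1_eq[of xs n 0 "[0]"] by simp
  from mt_run[of ?L xs] have "run xs (mintree ?L) \<in> set ?L" "\<not> xs!m < xs!(run xs (mintree ?L))"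
    using mL by auto
  moreover have "set ?L \<subseteq> {..<n}" using n by (auto simp: desc_def)
  ultimately have "run xs (A n) < n" "xs!(run xs (A n)) \<le> xs!m" unfolding r by auto
  moreover have "xs!(run xs (A n)) \<in> set xs" using calculation xs by auto
  moreover have "Min (set xs) \<le> xs!(run xs (A n))" using calculation(3) by (intro Min_le) auto
  ultimately show "xs ! run xs (A n) = Min (set xs)" using m(2) by linarith
qed

lemma log_ex: "(h::nat) \<ge> 1 \<Longrightarrow> \<exists>d. h \<le> 2^d \<and> (d = 0 \<or> 2^(d-1) < h)"
proof -
  assume h: "h \<ge> 1"
  define d where "d = (LEAST d. h \<le> (2::nat)^d)"
  have ex: "h \<le> 2^h" by (simp add: less_imp_le less_exp)
  have "h \<le> 2^d" unfolding d_def by (rule LeastI[of _ h]) (rule ex)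
  moreover have "d = 0 \<or> 2^(d-1) < h"
  proof (cases d)
    case (Suc d')
    have "\<not> h \<le> 2^d'" using not_less_Least[of d' "\<lambda>d. h \<le> (2::nat)^d"] Suc unfolding d_def by auto
    then show ?thesis using Suc by auto
  qed simp
  ultimately show ?thesis by blast
qed

lemma upper:
  assumes "xs \<noteq> []" "distinct xs" "e < length xs"
  shows "real (participations xs (A (length xs)) e) \<le> 4 * logm (real (inversions xs))"
proof -
  let ?n = "length xs"
  let ?L = "0 # desc xs 0 ?n"
  have dL: "distinct ?L" by (simp add: desc_def)
  have hL: "length ?L \<le> inversions xs + 1" using desc_len[OF assms(2)] by simp
  obtain d where d: "length ?L \<le> 2^d" "d = 0 \<or> 2^(d-1) < length ?L" using log_ex[of "length ?L"] by auto
  have p: "participations xs (A ?n) e = pc e (map (\<lambda>j. (j, Suc j)) [0..<?n-1]) + pc e (cmps xs (mintree ?L))"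
    unfolding participations_def A_def using ph1_eq[of xs ?n 0 "[0]"] by (simp add: pc_def)
  have "participations xs (A ?n) e \<le> 2 + d"
    using p pc_chain[of e "?n - 1"] mt_pc[OF dL d(1), of e xs] by simp
  moreover
  define I where "I = real (inversions xs)"
  have L1: "1 \<le> logm I" unfolding logm_def by simp
  have "real d \<le> 1 + logm I"
  proof (cases "d = 0")
    case False
    then have "2^(d-1) \<le> inversions xs" using d hL by simp
    then have "real (2^(d-1)) \<le> I" unfolding I_def by linarith
    then have "(2::real)^(d-1) \<le> max I 2" by simp
    then have "log 2 ((2::real)^(d-1)) \<le> log 2 (max I 2)" by (subst log_le_cancel_iff) auto
    moreover have "log 2 ((2::real)^(d-1)) = real (d-1)" by (rule log_pow_cancel) auto
    ultimately have "real (d - 1) \<le> logm I" unfolding logm_def by simp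
    then show ?thesis using False by simp
  qed (use L1 in simp)
  ultimately show ?thesis using L1 unfolding I_def[symmetric] by simp
qed




definition alive :: "nat \<Rightarrow> (nat \<Rightarrow> nat) \<Rightarrow> nat set" where
  "alive n w = {i. i < n \<and> 0 < w i}"

definition ainv :: "nat \<Rightarrow> (nat \<Rightarrow> nat) \<Rightarrow> (nat \<Rightarrow> nat) \<Rightarrow> nat \<Rightarrow> bool" where
  "ainv n w v T \<longleftrightarrow> 1 \<le> card (alive n w) \<and> card (alive n w) \<le> T \<and>
     (\<forall>i<n. w i = 0 \<longrightarrow> T \<le> v i) \<and> inj_on v {i. i < n \<and> w i = 0}"

definition cons :: "nat \<Rightarrow> (nat \<Rightarrow> nat) \<Rightarrow> (nat \<Rightarrow> nat) \<Rightarrow> nat \<Rightarrow> nat list \<Rightarrow> bool" where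
  "cons n w v T xs \<longleftrightarrow> length xs = n \<and> distinct xs \<and> (\<forall>i<n. w i = 0 \<longrightarrow> xs!i = v i)
      \<and> (\<forall>i<n. 0 < w i \<longrightarrow> xs!i < T)"

lemma fin_alive[simp]: "finite (alive n w)" unfolding alive_def by auto

lemma construct:
  assumes inv: "ainv n w v T" and a: "a \<in> alive n w"
  shows "\<exists>xs. cons n w v T xs \<and> xs!a = 0"
proof -
  let ?S = "alive n w"
  obtain h where h: "bij_betw h ?S {0..<card ?S}" using ex_bij_betw_finite_nat[of ?S] by auto
  define g where "g i = (if i = a then 0 else if h i = 0 then h a else h i)" for i
  have hS: "\<And>i. i \<in> ?S \<Longrightarrow> h i < card ?S" using h by (auto simp: bij_betw_def)
  have hinj: "\<And>i j. i \<in> ?S \<Longrightarrow> j \<in> ?S \<Longrightarrow> h i = h j \<Longrightarrow> i = j"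
    using h by (auto simp: bij_betw_def inj_on_def)
  have cpos: "0 < card ?S" using a card_gt_0_iff by fastforce
  have gS: "\<And>i. i \<in> ?S \<Longrightarrow> g i < card ?S" using hS a cpos unfolding g_def by auto
  have ginj: "\<And>i j. i \<in> ?S \<Longrightarrow> j \<in> ?S \<Longrightarrow> g i = g j \<Longrightarrow> i = j"
    unfolding g_def using hinj a by (auto split: if_splits)
  define f where "f i = (if 0 < w i then g i else v i)" for i
  define xs where "xs = map f [0..<n]"
  have an: "a < n" using a by (auto simp: alive_def)
  have cT: "card ?S \<le> T" and dv: "\<And>i. i < n \<Longrightarrow> w i = 0 \<Longrightarrow> T \<le> v i"
    and vinj: "inj_on v {i. i < n \<and> w i = 0}" using inv by (auto simp: ainv_def)
  have "inj_on f {0..<n}"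
  proof (rule inj_onI)
    fix i j assume i: "i \<in> {0..<n}" and j: "j \<in> {0..<n}" and e: "f i = f j"
    show "i = j"
    proof (cases "0 < w i"; cases "0 < w j")
      assume "0 < w i" "0 < w j"
      then show ?thesis using ginj[of i j] e i j by (auto simp: f_def alive_def)
    next
      assume "0 < w i" "\<not> 0 < w j"
      then have "f i < card ?S" "T \<le> f j" using gS[of i] dv[of j] i j by (auto simp: f_def alive_def)
      then show ?thesis using e cT by linarith
    next
      assume "\<not> 0 < w i" "0 < w j"
      then have "f j < card ?S" "T \<le> f i" using gS[of j] dv[of i] i j by (auto simp: f_def alive_def)
      then show ?thesis using e cT by linarith
    next
      assume "\<not> 0 < w i" "\<not> 0 < w j"
      then show ?thesis using vinj e i j by (auto simp: f_def inj_on_def)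
    qed
  qed
  then have "distinct xs" unfolding xs_def by (simp add: distinct_map)
  moreover have "\<forall>i<n. 0 < w i \<longrightarrow> xs!i < T"
    using gS cT unfolding xs_def f_def alive_def by (auto intro: less_le_trans)
  moreover have "xs!a = 0" using an a unfolding xs_def f_def g_def alive_def by simp
  moreover have "length xs = n" unfolding xs_def by simp
  moreover have "\<forall>i<n. w i = 0 \<longrightarrow> xs!i = v i" unfolding xs_def f_def by simp
  ultimately show ?thesis unfolding cons_def by blast
qed

lemma sum_alive: "(\<Sum>i<n. w i) = sum w (alive n w)"
  by (rule sum.mono_neutral_right) (auto simp: alive_def)

lemma sum_two: "i < (n::nat) \<Longrightarrow> j < n \<Longrightarrow> i \<noteq> j \<Longrightarrow>
   (\<Sum>k<n. (f k :: nat)) = f i + f j + (\<Sum>k\<in>{..<n} - {i, j}. f k)"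
proof -
  assume a: "i < n" "j < n" "i \<noteq> j"
  have "(\<Sum>k<n. f k) = f i + (\<Sum>k\<in>{..<n} - {i}. f k)" using a sum.remove[of "{..<n}" i f] by simp
  also have "(\<Sum>k\<in>{..<n} - {i}. f k) = f j + (\<Sum>k\<in>{..<n} - {i} - {j}. f k)"
    by (rule sum.remove) (use a in auto)
  also have "{..<n} - {i} - {j} = {..<n} - {i, j}" by auto
  finally show ?thesis by simp
qed

lemma merge:
  assumes inv: "ainv n w v T" and ab: "a < n" "b < n" "a \<noteq> b" "0 < w a" "0 < w b"
  defines "w' \<equiv> w(a := w a + w b, b := 0)" and "v' \<equiv> v(b := T - 1)"
  shows "ainv n w' v' (T - 1)"
    and "cons n w' v' (T - 1) xs \<Longrightarrow> cons n w v T xs \<and> xs!a < xs!b"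
    and "(\<Sum>k<n. w' k) = (\<Sum>k<n. w k)"
proof -
  have al: "alive n w' = alive n w - {b}" using ab unfolding alive_def w'_def by auto
  have "{a, b} \<subseteq> alive n w" using ab by (auto simp: alive_def)
  then have "card {a, b} \<le> card (alive n w)" by (intro card_mono) auto
  then have c2: "2 \<le> card (alive n w)" using ab by simp
  have cT: "card (alive n w) \<le> T" and dv: "\<And>i. i < n \<Longrightarrow> w i = 0 \<Longrightarrow> T \<le> v i"
    and vinj: "inj_on v {i. i < n \<and> w i = 0}" using inv by (auto simp: ainv_def)
  have cal: "card (alive n w') = card (alive n w) - 1"
    unfolding al using ab by (simp add: alive_def)
  have dead: "{i. i < n \<and> w' i = 0} = insert b {i. i < n \<and> w i = 0}"
    using ab unfolding w'_def by auto
  have "inj_on v' {i. i < n \<and> w' i = 0}"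
    unfolding dead
  proof (rule inj_onI)
    fix x y assume x: "x \<in> insert b {i. i < n \<and> w i = 0}" and y: "y \<in> insert b {i. i < n \<and> w i = 0}"
      and e: "v' x = v' y"
    have bd: "b \<notin> {i. i < n \<and> w i = 0}" using ab by auto
    show "x = y"
    proof (cases "x = b"; cases "y = b")
      assume "x = b" "y \<noteq> b"
      then have "T \<le> v y" "v' x = T - 1" "v' y = v y" using y dv unfolding v'_def by auto
      then show ?thesis using e c2 cT by linarith
    next
      assume "x \<noteq> b" "y = b"
      then have "T \<le> v x" "v' y = T - 1" "v' x = v x" using x dv unfolding v'_def by auto
      then show ?thesis using e c2 cT by linarith
    next
      assume "x \<noteq> b" "y \<noteq> b"
      then show ?thesis using x y e vinj unfolding v'_def by (auto simp: inj_on_def)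
    qed simp
  qed
  moreover have "\<forall>i<n. w' i = 0 \<longrightarrow> T - 1 \<le> v' i"
  proof (intro allI impI)
    fix i assume i: "i < n" "w' i = 0"
    show "T - 1 \<le> v' i"
    proof (cases "i = b")
      case False
      then have "i \<noteq> a" "w i = 0" using i ab unfolding w'_def by (auto split: if_splits)
      then show ?thesis using dv[of i] i False unfolding v'_def by auto
    qed (simp add: v'_def)
  qed
  ultimately show "ainv n w' v' (T - 1)" using cal c2 cT unfolding ainv_def by auto
  show "cons n w' v' (T - 1) xs \<Longrightarrow> cons n w v T xs \<and> xs!a < xs!b"
  proof -
    assume cs: "cons n w' v' (T - 1) xs"
    have xb: "xs!b = T - 1" using cs ab unfolding cons_def w'_def v'_def by auto
    have xa: "xs!a < T - 1" using cs ab unfolding cons_def w'_def by auto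
    have "\<forall>i<n. w i = 0 \<longrightarrow> xs!i = v i"
    proof (intro allI impI)
      fix i assume "i < n" "w i = 0"
      then have "i \<noteq> a" "i \<noteq> b" using ab by auto
      then show "xs!i = v i" using cs \<open>i < n\<close> \<open>w i = 0\<close> unfolding cons_def w'_def v'_def by auto
    qed
    moreover have "\<forall>i<n. 0 < w i \<longrightarrow> xs!i < T"
    proof (intro allI impI)
      fix i assume i: "i < n" "0 < w i"
      show "xs!i < T"
      proof (cases "i = b")
        case True
        then have "xs!i = T - 1" using xb by simp
        then show ?thesis using c2 cT by linarith
      next
        case False
        then have "0 < w' i" using i unfolding w'_def by auto
        then show ?thesis using cs i unfolding cons_def by auto
      qed
    qed
    ultimately show ?thesis using cs xa xb unfolding cons_def by auto
  qed
  show "(\<Sum>k<n. w' k) = (\<Sum>k<n. w k)"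
    using sum_two[OF ab(1,2,3), of w'] sum_two[OF ab(1,2,3), of w] ab
    by (simp add: w'_def)
qed

lemma adv:
  "wf_tree n t \<Longrightarrow> ainv n w v T \<Longrightarrow> (\<forall>xs. cons n w v T xs \<longrightarrow> xs ! run xs t = Min (set xs)) \<Longrightarrow>
   \<exists>xs e. cons n w v T xs \<and> e < n \<and> 0 < w e \<and> (\<Sum>i<n. w i) \<le> 2^(pc e (cmps xs t)) * w e"
proof (induction t arbitrary: w v T)
  case (Leaf r)
  have rn: "r < n" using Leaf(1) by simp
  have c1: "card (alive n w) = 1"
  proof (rule ccontr)
    assume "card (alive n w) \<noteq> 1"
    then have "2 \<le> card (alive n w)" using Leaf(2) unfolding ainv_def by auto
    then have "\<not> alive n w \<subseteq> {r}"
      using card_mono[of "{r}" "alive n w"] by auto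
    then obtain a where a: "a \<in> alive n w" "a \<noteq> r" by auto
    obtain xs where xs: "cons n w v T xs" "xs!a = 0" using construct[OF Leaf(2) a(1)] by auto
    have an: "a < n" using a by (simp add: alive_def)
    have "xs ! r = Min (set xs)" using Leaf(3) xs(1) by simp
    moreover have "0 \<in> set xs" using xs an unfolding cons_def by (metis nth_mem)
    ultimately have "xs ! r = 0" by (metis List.finite_set Min_le le_zero_eq)
    then have "r = a" using xs rn an nth_eq_iff_index_eq[of xs r a] unfolding cons_def by auto
    then show False using a by simp
  qed
  then obtain e where e: "alive n w = {e}" using card_1_singletonE by blast
  obtain xs where xs: "cons n w v T xs" using construct[OF Leaf(2), of e] e by auto
  have "(\<Sum>i<n. w i) = w e" unfolding sum_alive e by simp
  then show ?case using xs e by (intro exI[of _ xs] exI[of _ e]) (auto simp: alive_def)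
next
  case (Cmp i j l r)
  have ij: "i < n" "j < n" and wfl: "wf_tree n l" and wfr: "wf_tree n r" using Cmp(3) by auto
  have inv: "ainv n w v T" by fact
  have cor: "\<And>xs. cons n w v T xs \<Longrightarrow> xs ! run xs (Cmp i j l r) = Min (set xs)" using Cmp(5) by blast
  have dv: "\<And>k. k < n \<Longrightarrow> w k = 0 \<Longrightarrow> T \<le> v k" using inv by (auto simp: ainv_def)
  have vinj: "inj_on v {k. k < n \<and> w k = 0}" using inv by (auto simp: ainv_def)
  have goL: ?case if L: "\<And>xs. cons n w v T xs \<Longrightarrow> xs!i < xs!j"
  proof -
    have "\<forall>xs. cons n w v T xs \<longrightarrow> xs ! run xs l = Min (set xs)"
      using cor L by (metis run.simps(2))
    from Cmp(1)[OF wfl inv this] obtain xs e where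
      xe: "cons n w v T xs" "e < n" "0 < w e" "(\<Sum>i<n. w i) \<le> 2^(pc e (cmps xs l)) * w e" by blast
    have "pc e (cmps xs l) \<le> pc e (cmps xs (Cmp i j l r))" using L[OF xe(1)] by simp
    then have "(2::nat)^(pc e (cmps xs l)) * w e \<le> 2^(pc e (cmps xs (Cmp i j l r))) * w e"
      by (intro mult_right_mono power_increasing) auto
    then show ?thesis using xe by (meson le_trans)
  qed
  have goR: ?case if R: "\<And>xs. cons n w v T xs \<Longrightarrow> \<not> xs!i < xs!j"
  proof -
    have "\<forall>xs. cons n w v T xs \<longrightarrow> xs ! run xs r = Min (set xs)"
      using cor R by (metis run.simps(2))
    from Cmp(2)[OF wfr inv this] obtain xs e where
      xe: "cons n w v T xs" "e < n" "0 < w e" "(\<Sum>i<n. w i) \<le> 2^(pc e (cmps xs r)) * w e" by blast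
    have "pc e (cmps xs r) \<le> pc e (cmps xs (Cmp i j l r))" using R[OF xe(1)] by simp
    then have "(2::nat)^(pc e (cmps xs r)) * w e \<le> 2^(pc e (cmps xs (Cmp i j l r))) * w e"
      by (intro mult_right_mono power_increasing) auto
    then show ?thesis using xe by (meson le_trans)
  qed
  show ?case
  proof (cases "w i = 0")
    case wi: True
    show ?thesis
    proof (cases "w j = 0")
      case wj: True
      show ?thesis
      proof (cases "v i < v j")
        case True
        show ?thesis by (rule goL) (use wi wj True ij in \<open>auto simp: cons_def\<close>)
      next
        case False
        show ?thesis by (rule goR) (use wi wj False ij in \<open>auto simp: cons_def\<close>)
      qed
    next
      case wj: False
      show ?thesis
      proof (rule goR)
        fix xs assume c: "cons n w v T xs"
        then have "xs!j < T" "xs!i = v i" using wi wj ij unfolding cons_def by auto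
        then show "\<not> xs!i < xs!j" using dv[OF ij(1) wi] by linarith
      qed
    qed
  next
    case wi: False
    show ?thesis
    proof (cases "w j = 0")
      case wj: True
      show ?thesis
      proof (rule goL)
        fix xs assume c: "cons n w v T xs"
        then have "xs!i < T" "xs!j = v j" using wi wj ij unfolding cons_def by auto
        then show "xs!i < xs!j" using dv[OF ij(2) wj] by linarith
      qed
    next
      case wj: False
      show ?thesis
      proof (cases "i = j")
        case True
        show ?thesis by (rule goR) (use True in simp)
      next
        case neq: False
        show ?thesis
        proof (cases "w j \<le> w i")
          case le: True
          define w' where "w' = w(i := w i + w j, j := 0)"
          define v' where "v' = v(j := T - 1)"
          have m1: "ainv n w' v' (T - 1)" and m2: "\<And>xs. cons n w' v' (T - 1) xs \<Longrightarrow> cons n w v T xs \<and> xs!i < xs!j"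
            and m3: "(\<Sum>k<n. w' k) = (\<Sum>k<n. w k)"
            using merge[OF inv ij neq] wi wj unfolding w'_def v'_def by auto
          have "\<forall>xs. cons n w' v' (T - 1) xs \<longrightarrow> xs ! run xs l = Min (set xs)"
            using cor m2 by (metis run.simps(2))
          from Cmp(1)[OF wfl m1 this] obtain xs e where
            xe: "cons n w' v' (T - 1) xs" "e < n" "0 < w' e" "(\<Sum>i<n. w' i) \<le> 2^(pc e (cmps xs l)) * w' e"
            by blast
          have cx: "cons n w v T xs" "xs!i < xs!j" using m2[OF xe(1)] by auto
          have cm: "cmps xs (Cmp i j l r) = (i, j) # cmps xs l" using cx(2) by simp
          show ?thesis
          proof (cases "e = i")
            case True
            have "(\<Sum>k<n. w k) \<le> 2^(pc i (cmps xs l)) * (w i + w j)"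
              using xe(4) m3 True unfolding w'_def using neq by simp
            also have "\<dots> \<le> 2^(pc i (cmps xs l)) * (2 * w i)" using le by simp
            also have "\<dots> = 2^(pc i (cmps xs (Cmp i j l r))) * w i" unfolding cm by simp
            finally show ?thesis using cx(1) ij wi by blast
          next
            case False
            then have "e \<noteq> j" using xe(3) unfolding w'_def by auto
            then have we: "w' e = w e" using False unfolding w'_def by simp
            have "pc e (cmps xs l) \<le> pc e (cmps xs (Cmp i j l r))" unfolding cm by simp
            then have "(2::nat)^(pc e (cmps xs l)) * w e \<le> 2^(pc e (cmps xs (Cmp i j l r))) * w e"
              by (intro mult_right_mono power_increasing) auto
            then show ?thesis using xe cx we m3 by (metis le_trans)
          qed
        next
          case lt: False
          define w' where "w' = w(j := w j + w i, i := 0)"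
          define v' where "v' = v(i := T - 1)"
          have m1: "ainv n w' v' (T - 1)" and m2: "\<And>xs. cons n w' v' (T - 1) xs \<Longrightarrow> cons n w v T xs \<and> xs!j < xs!i"
            and m3: "(\<Sum>k<n. w' k) = (\<Sum>k<n. w k)"
            using merge[OF inv ij(2,1)] neq wi wj unfolding w'_def v'_def by auto
          have "\<forall>xs. cons n w' v' (T - 1) xs \<longrightarrow> xs ! run xs r = Min (set xs)"
            using cor m2 by (metis run.simps(2) less_asym)
          from Cmp(2)[OF wfr m1 this] obtain xs e where
            xe: "cons n w' v' (T - 1) xs" "e < n" "0 < w' e" "(\<Sum>i<n. w' i) \<le> 2^(pc e (cmps xs r)) * w' e"
            by blast
          have cx: "cons n w v T xs" "xs!j < xs!i" using m2[OF xe(1)] by auto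
          have cm: "cmps xs (Cmp i j l r) = (i, j) # cmps xs r" using cx(2) by simp
          show ?thesis
          proof (cases "e = j")
            case True
            have "(\<Sum>k<n. w k) \<le> 2^(pc j (cmps xs r)) * (w j + w i)"
              using xe(4) m3 True unfolding w'_def using neq by simp
            also have "\<dots> \<le> 2^(pc j (cmps xs r)) * (2 * w j)" using lt by simp
            also have "\<dots> = 2^(pc j (cmps xs (Cmp i j l r))) * w j" unfolding cm by simp
            finally show ?thesis using cx(1) ij wj by blast
          next
            case False
            then have "e \<noteq> i" using xe(3) unfolding w'_def by auto
            then have we: "w' e = w e" using False unfolding w'_def by simp
            have "pc e (cmps xs r) \<le> pc e (cmps xs (Cmp i j l r))" unfolding cm by simp
            then have "(2::nat)^(pc e (cmps xs r)) * w e \<le> 2^(pc e (cmps xs (Cmp i j l r))) * w e"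
              by (intro mult_right_mono power_increasing) auto
            then show ?thesis using xe cx we m3 by (metis le_trans)
          qed
        qed
      qed
    qed
  qed
qed

lemma lower_core:
  assumes n: "n \<ge> 1" and t: "finds_min n t"
  shows "\<exists>xs e. length xs = n \<and> distinct xs \<and> e < n \<and> n \<le> 2^(participations xs t e)"
proof -
  let ?w = "\<lambda>_::nat. 1::nat" and ?v = "\<lambda>_::nat. 0::nat"
  have al: "alive n ?w = {..<n}" by (auto simp: alive_def)
  have inv: "ainv n ?w ?v n" using n unfolding ainv_def al by auto
  have "\<forall>xs. cons n ?w ?v n xs \<longrightarrow> xs ! run xs t = Min (set xs)"
    using t unfolding finds_min_def cons_def by auto
  from adv[OF _ inv this] t obtain xs e where
    "cons n ?w ?v n xs" "e < n" "(\<Sum>i<n. ?w i) \<le> 2^(pc e (cmps xs t)) * ?w e"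
    unfolding finds_min_def by blast
  then show ?thesis unfolding cons_def participations_def pc_def by auto
qed

lemma inv_bound: "inversions xs \<le> length xs * length xs"
proof -
  have "{(i, j). i < j \<and> j < length xs \<and> xs ! i > xs ! j} \<subseteq> {..<length xs} \<times> {..<length xs}" by auto
  from card_mono[OF _ this] show ?thesis unfolding inversions_def by (simp add: card_cartesian_product)
qed

lemma two_case:
  assumes t: "finds_min 2 t"
  shows "\<exists>e<2. 1 \<le> participations [0, 1] t e"
proof (cases t)
  case (Leaf r)
  have r: "r < 2" using t Leaf by (simp add: finds_min_def)
  have "[0::nat, 1] ! r = Min (set [0, 1])" "[1::nat, 0] ! r = Min (set [1, 0])"
    using t Leaf unfolding finds_min_def by (auto simp del: Min_insert)
  then show ?thesis using r by (cases r) auto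
next
  case (Cmp i j l r)
  have "i < 2" using t Cmp by (simp add: finds_min_def)
  moreover have "1 \<le> participations [0, 1] t i" using Cmp by (simp add: participations_def)
  ultimately show ?thesis by blast
qed

lemma inv01: "inversions [0::nat, 1] = 0"
proof -
  have "{(i, j). i < j \<and> j < length [0::nat, 1] \<and> [0::nat, 1] ! i > [0::nat, 1] ! j} = {}"
  proof -
    have "(i, j) \<notin> {(i, j). i < j \<and> j < length [0::nat, 1] \<and> [0::nat, 1] ! i > [0::nat, 1] ! j}" for i j
    proof (cases "i < j \<and> j < 2")
      case True
      then have "i = 0" "j = 1" by auto
      then show ?thesis by simp
    qed auto
    then show ?thesis by auto
  qed
  then show ?thesis unfolding inversions_def by (simp only: card.empty)
qed

lemma lower:
  "\<exists>c > 0. \<forall>k :: nat. \<exists>n \<ge> 1. \<forall>t. finds_min n t \<longrightarrow>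
            (\<exists>xs. length xs = n \<and> distinct xs \<and> inversions xs \<le> k \<and>
               (\<exists>e < n. real (participations xs t e) \<ge> c * logm (real k)))"
proof (intro exI[of _ "1/4 :: real"] conjI allI)
  fix k :: nat
  show "\<exists>n \<ge> 1. \<forall>t. finds_min n t \<longrightarrow>
            (\<exists>xs. length xs = n \<and> distinct xs \<and> inversions xs \<le> k \<and>
               (\<exists>e < n. real (participations xs t e) \<ge> 1/4 * logm (real k)))"
  proof (cases "k < 16")
    case True
    have lg: "logm (real k) \<le> 4"
    proof -
      have "max (real k) 2 \<le> 2^4" using True by simp
      then have "log 2 (max (real k) 2) \<le> log 2 (2^4)" by (subst log_le_cancel_iff) auto
      also have "log 2 ((2::real)^4) = 4" using log_pow_cancel[of "2::real" 4] by simp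
      finally show ?thesis unfolding logm_def .
    qed
    show ?thesis
    proof (intro exI[of _ 2] conjI allI impI)
      fix t assume t: "finds_min 2 t"
      obtain e where e: "e < 2" "1 \<le> participations [0, 1] t e" using two_case[OF t] by blast
      show "\<exists>xs. length xs = 2 \<and> distinct xs \<and> inversions xs \<le> k \<and>
               (\<exists>e < 2. real (participations xs t e) \<ge> 1/4 * logm (real k))"
        using e lg inv01 by (intro exI[of _ "[0::nat, 1]"]) force
    qed simp
  next
    case False
    define n where "n = floor_sqrt k"
    have n4: "4 \<le> n" unfolding n_def using False by (intro le_floor_sqrtI) simp
    have nk: "n * n \<le> k" unfolding n_def using floor_sqrt_power2_le[of k] by (simp add: power2_eq_square)
    have kn: "k < (n + 1) * (n + 1)" unfolding n_def using Suc_floor_sqrt_power2_gt[of k] by (simp add: power2_eq_square)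
    show ?thesis
    proof (intro exI[of _ n] conjI allI impI)
      show "1 \<le> n" using n4 by simp
      fix t assume t: "finds_min n t"
      obtain xs e where xe: "length xs = n" "distinct xs" "e < n" "n \<le> 2^(participations xs t e)"
        using lower_core[OF _ t] n4 by auto
      define p where "p = participations xs t e"
      have "(n + 1) * (n + 1) \<le> n * n * (n * n)"
      proof -
        have "n + 1 \<le> n * n" using n4 mult_le_mono1[of 2 n n] by linarith
        then show ?thesis by (intro mult_le_mono) auto
      qed
      also have "\<dots> \<le> 2^p * 2^p * (2^p * 2^p)" using xe(4) unfolding p_def by (intro mult_le_mono) auto
      also have "\<dots> = 2^(4*p)"
      proof -
        have e: "p + p + (p + p) = 4 * p" by simp
        show ?thesis unfolding e[symmetric] power_add by (rule refl)
      qed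
      finally have k2: "k \<le> 2^(4*p)" using kn by linarith
      have "max (real k) 2 = real k" using False by simp
      moreover have "real k \<le> 2^(4*p)" using k2 by (metis of_nat_le_iff of_nat_numeral of_nat_power)
      ultimately have "log 2 (max (real k) 2) \<le> log 2 (2^(4*p))" using False by (subst log_le_cancel_iff) auto
      then have "logm (real k) \<le> 4 * p" unfolding logm_def by simp
      then have "1/4 * logm (real k) \<le> real p" by simp
      then show "\<exists>xs. length xs = n \<and> distinct xs \<and> inversions xs \<le> k \<and>
               (\<exists>e < n. real (participations xs t e) \<ge> 1/4 * logm (real k))"
        using xe inv_bound[of xs] nk unfolding p_def by (intro exI[of _ xs]) auto
    qed
  qed
qed (simp)

theorem theorem8:
  shows "(\<exists>A :: nat \<Rightarrow> ctree. \<exists>c > 0.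
            (\<forall>n \<ge> 1. finds_min n (A n)) \<and>
            (\<forall>xs. xs \<noteq> [] \<and> distinct xs \<longrightarrow>
               (\<forall>e < length xs. real (participations xs (A (length xs)) e)
                                   \<le> c * logm (real (inversions xs)))))
       \<and> (\<exists>c > 0. \<forall>k :: nat. \<exists>n \<ge> 1. \<forall>t. finds_min n t \<longrightarrow>
            (\<exists>xs. length xs = n \<and> distinct xs \<and> inversions xs \<le> k \<and>
               (\<exists>e < n. real (participations xs t e) \<ge> c * logm (real k))))"
  proof (rule conjI)
  show "\<exists>A :: nat \<Rightarrow> ctree. \<exists>c > 0.
            (\<forall>n \<ge> 1. finds_min n (A n)) \<and>
            (\<forall>xs. xs \<noteq> [] \<and> distinct xs \<longrightarrow>
               (\<forall>e < length xs. real (participations xs (A (length xs)) e)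
                                   \<le> c * logm (real (inversions xs))))"
    using A_correct upper by (intro exI[of _ A] exI[of _ "4::real"]) auto
  show "\<exists>c > 0. \<forall>k :: nat. \<exists>n \<ge> 1. \<forall>t. finds_min n t \<longrightarrow>
            (\<exists>xs. length xs = n \<and> distinct xs \<and> inversions xs \<le> k \<and>
               (\<exists>e < n. real (participations xs t e) \<ge> c * logm (real k)))"
    by (rule lower)
qed

end
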